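(* Let $n\ge1$ and let $w_{12},w_{13},w_{23}$ be real numbers. For the minimal algorithm transferring $n$ disks from Peg 1 to Peg 3, played alternately by Anh (odd-numbered moves) and Bao (even-numbered moves), the total score is $\Delta_{13}(n)=w_{13}$ if $n$ is odd, and $\Delta_{13}(n)=w_{12}+w_{23}-w_{13}$ if $n$ is even.
   Context: Tower of Hanoi on three pegs (labeled 1, 2, 3) with disks $1<2<\dots<n$ ordered by size; a legal move transfers the top disk of one peg to a different peg that is empty or has a larger top disk. A move between Peg $i$ and Peg $j$ (either direction) is a move along edge $\{i,j\}$ and earns the mover the real weight $w_{ij}=w_{ji}$. The minimal algorithm $\mathcal{M}(n;i\to j)$ ($i\ne j$, $k$ the third peg) is defined recursively: $\mathcal{M}(1;i\to j)$ is the single move of disk 1 from $i$ to $j$; for $n\ge2$, $\mathcal{M}(n;i\to j)$ is $\mathcal{M}(n-1;i\to k)$, then the move of disk $n$ from $i$ to $j$, then $\mathcal{M}(n-1;k\to j)$; it has $2^n-1$ moves. When a move sequence is played in the two-player game, Anh makes moves $1,3,5,\dots$ and Bao makes moves $2,4,\dots$; $A_{ij}(n)$ and $B_{ij}(n)$ are the total points of Anh and Bao for $\mathcal{M}(n;i\to j)$, and $\Delta_{ij}(n)=A_{ij}(n)-B_{ij}(n)$. *)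

theory Defs
  imports Main "HOL.Real"
begin

text \<open>Pegs are 1, 2, 3. A move is a pair (source, target). The third peg of
  distinct pegs i, j in {1,2,3} is 6 - i - j.\<close>

definition third_peg :: "nat \<Rightarrow> nat \<Rightarrow> nat" where
  "third_peg i j = 6 - i - j"

text \<open>The minimal algorithm M(n; i -> j) as its list of moves (only the pegs of
  each move matter for scoring). hanoi 0 is empty, so hanoi 1 i j = [(i,j)].\<close>

fun hanoi :: "nat \<Rightarrow> nat \<Rightarrow> nat \<Rightarrow> (nat \<times> nat) list" where
  "hanoi 0 i j = []"
| "hanoi (Suc n) i j =
     hanoi n i (third_peg i j) @ [(i, j)] @ hanoi n (third_peg i j) j"

definition edge_weight :: "real \<Rightarrow> real \<Rightarrow> real \<Rightarrow> nat \<times> nat \<Rightarrow> real" where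
  "edge_weight w12 w13 w23 m =
     (if fst m \<in> {1,2} \<and> snd m \<in> {1,2} then w12
      else if fst m \<in> {1,3} \<and> snd m \<in> {1,3} then w13
      else w23)"

text \<open>Anh makes moves 1,3,5,... (0-based indices 0,2,4,...); Bao makes moves 2,4,...\<close>

definition anh_score :: "real \<Rightarrow> real \<Rightarrow> real \<Rightarrow> (nat \<times> nat) list \<Rightarrow> real" where
  "anh_score w12 w13 w23 ms =
     (\<Sum>k\<in>{k. k < length ms \<and> even k}. edge_weight w12 w13 w23 (ms ! k))"

definition bao_score :: "real \<Rightarrow> real \<Rightarrow> real \<Rightarrow> (nat \<times> nat) list \<Rightarrow> real" where
  "bao_score w12 w13 w23 ms =
     (\<Sum>k\<in>{k. k < length ms \<and> odd k}. edge_weight w12 w13 w23 (ms ! k))"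

definition Delta :: "real \<Rightarrow> real \<Rightarrow> real \<Rightarrow> nat \<Rightarrow> nat \<Rightarrow> nat \<Rightarrow> real" where
  "Delta w12 w13 w23 i j n =
     anh_score w12 w13 w23 (hanoi n i j) - bao_score w12 w13 w23 (hanoi n i j)"

end

theory Submission
  imports Defs
begin

fun alt :: "(nat \<times> nat \<Rightarrow> real) \<Rightarrow> (nat \<times> nat) list \<Rightarrow> real" where
  "alt W [] = 0"
| "alt W (x # xs) = W x - alt W xs"

lemma alt_append: "alt W (a @ b) = alt W a + (-1) ^ length a * alt W b"
  by (induction a) auto

lemma alt_sum: "alt W ms = (\<Sum>k<length ms. (-1) ^ k * W (ms ! k))"
proof (induction ms)
  case Nil then show ?case by simp
next
  case (Cons x xs)
  have "(\<Sum>k<length (x # xs). (-1) ^ k * W ((x # xs) ! k))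
        = W x + (\<Sum>k<length xs. (-1) ^ Suc k * W ((x # xs) ! Suc k))"
    by (simp add: sum.lessThan_Suc_shift del: sum.lessThan_Suc)
  also have "\<dots> = W x - (\<Sum>k<length xs. (-1) ^ k * W (xs ! k))"
    by (simp add: sum_negf)
  finally show ?case using Cons by simp
qed

lemma split_sum:
  fixes f :: "nat \<Rightarrow> real"
  shows "(\<Sum>k\<in>{k. k < m \<and> even k}. f k) - (\<Sum>k\<in>{k. k < m \<and> odd k}. f k)
         = (\<Sum>k<m. (-1) ^ k * f k)"
proof -
  have "(\<Sum>k<m. (-1) ^ k * f k) = (\<Sum>k\<in>{..<m} \<inter> {k. even k}. f k) + (\<Sum>k\<in>{..<m} \<inter> - {k. even k}. - f k)"
  proof -
    have "(\<Sum>k<m. (-1) ^ k * f k) = (\<Sum>k<m. if even k then f k else - f k)"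
      by (rule sum.cong) auto
    then show ?thesis by (simp only: sum.If_cases finite_lessThan)
  qed
  also have "{..<m} \<inter> {k. even k} = {k. k < m \<and> even k}" by auto
  also have "{..<m} \<inter> - {k. even k} = {k. k < m \<and> odd k}" by auto
  finally show ?thesis by (simp add: sum_negf)
qed

lemma Delta_alt: "Delta w12 w13 w23 i j n = alt (edge_weight w12 w13 w23) (hanoi n i j)"
  unfolding Delta_def anh_score_def bao_score_def alt_sum split_sum ..

lemma len_hanoi: "length (hanoi n i j) = 2 ^ n - 1"
proof (induction n arbitrary: i j)
  case 0 then show ?case by simp
next
  case (Suc n)
  have "(1::nat) \<le> 2 ^ n" by simp
  then show ?case using Suc by (simp add: algebra_simps)
qed

lemma odd_len: "n \<ge> 1 \<Longrightarrow> odd (length (hanoi n i j))"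
  by (simp add: len_hanoi)

lemma main:
  fixes W :: "nat \<times> nat \<Rightarrow> real"
  assumes sym: "\<And>a b. W (a, b) = W (b, a)"
  shows "n \<ge> 1 \<Longrightarrow> i \<in> {1,2,3} \<Longrightarrow> j \<in> {1,2,3} \<Longrightarrow> i \<noteq> j \<Longrightarrow>
    alt W (hanoi n i j) = (if odd n then W (i, j)
       else W (i, third_peg i j) + W (third_peg i j, j) - W (i, j))"
proof (induction n arbitrary: i j rule: nat_induct_at_least)
  case base then show ?case by simp
next
  case (Suc n)
  define k where "k = third_peg i j"
  have k: "k \<in> {1,2,3}" "k \<noteq> i" "k \<noteq> j" "third_peg i k = j" "third_peg k j = i"
    using Suc.prems unfolding k_def third_peg_def by auto
  have "alt W (hanoi (Suc n) i j) = alt W (hanoi n i k) - W (i, j) + alt W (hanoi n k j)"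
    using odd_len[OF Suc.hyps, of i k] by (simp add: alt_append k_def)
  then show ?case
    using Suc.IH[of i k] Suc.IH[of k j] Suc.prems k sym[of k i] sym[of j k] sym[of k j]
    by (auto simp: k_def[symmetric])
qed

theorem lemma1:
  fixes w12 w13 w23 :: real and n :: nat
  assumes "n \<ge> 1"
  shows "Delta w12 w13 w23 1 3 n = (if odd n then w13 else w12 + w23 - w13)"
proof -
  let ?W = "edge_weight w12 w13 w23"
  have sym: "\<And>a b. ?W (a, b) = ?W (b, a)" by (auto simp: edge_weight_def)
  show ?thesis
    unfolding Delta_alt using main[of ?W, OF sym, OF assms, of 1 3]
    by (simp add: edge_weight_def third_peg_def)
qed

end
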